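(* Let $\Gamma$ be a finite connected $(G,2)$-distance-transitive graph of valency $k\ge2$, and suppose $\gcd(c_2,k-1)=1$. Then either $\Gamma$ has girth $3$ or $\Gamma$ is $(G,2)$-arc-transitive.
   Context: For $G\le\mathrm{Aut}(\Gamma)$, $\Gamma$ is $(G,2)$-distance-transitive if its diameter is at least $2$, $G$ is vertex-transitive and $G_u$ is transitive on $\Gamma(u)$ and $\Gamma_2(u)$ for each $u$. $c_2$ is the number of common neighbours of two vertices at distance $2$. $\Gamma$ is $(G,2)$-arc-transitive if $G$ is transitive on vertices and on $2$-arcs (triples $(u_0,u_1,u_2)$ with $u_0\sim u_1\sim u_2$, $u_0\ne u_2$). *)

theory Defs
  imports "HOL-Combinatorics.Permutations"
begin

definition simple_graph :: "'a set \<Rightarrow> ('a \<Rightarrow> 'a \<Rightarrow> bool) \<Rightarrow> bool" where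
  "simple_graph V E \<longleftrightarrow> finite V \<and> (\<forall>x y. E x y \<longrightarrow> x \<in> V \<and> y \<in> V)
     \<and> (\<forall>x y. E x y \<longrightarrow> E y x) \<and> (\<forall>x. \<not> E x x)"

definition nbrs :: "('a \<Rightarrow> 'a \<Rightarrow> bool) \<Rightarrow> 'a \<Rightarrow> 'a set" where
  "nbrs E u = {v. E u v}"

definition connected_graph :: "'a set \<Rightarrow> ('a \<Rightarrow> 'a \<Rightarrow> bool) \<Rightarrow> bool" where
  "connected_graph V E \<longleftrightarrow> (\<forall>u\<in>V. \<forall>v\<in>V. \<exists>n. (E ^^ n) u v)"

definition gdist :: "('a \<Rightarrow> 'a \<Rightarrow> bool) \<Rightarrow> 'a \<Rightarrow> 'a \<Rightarrow> nat" where
  "gdist E u v = (LEAST n. (E ^^ n) u v)"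

definition sphere :: "'a set \<Rightarrow> ('a \<Rightarrow> 'a \<Rightarrow> bool) \<Rightarrow> nat \<Rightarrow> 'a \<Rightarrow> 'a set" where
  "sphere V E i u = {v \<in> V. gdist E u v = i}"

definition diameter :: "'a set \<Rightarrow> ('a \<Rightarrow> 'a \<Rightarrow> bool) \<Rightarrow> nat" where
  "diameter V E = Max {gdist E u v | u v. u \<in> V \<and> v \<in> V}"

definition regular :: "'a set \<Rightarrow> ('a \<Rightarrow> 'a \<Rightarrow> bool) \<Rightarrow> nat \<Rightarrow> bool" where
  "regular V E k \<longleftrightarrow> (\<forall>v\<in>V. card (nbrs E v) = k)"

definition is_cycle :: "'a set \<Rightarrow> ('a \<Rightarrow> 'a \<Rightarrow> bool) \<Rightarrow> 'a list \<Rightarrow> bool" where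
  "is_cycle V E xs \<longleftrightarrow> length xs \<ge> 3 \<and> distinct xs \<and> set xs \<subseteq> V \<and>
     (\<forall>i < length xs. E (xs ! i) (xs ! ((i + 1) mod length xs)))"

definition girth :: "'a set \<Rightarrow> ('a \<Rightarrow> 'a \<Rightarrow> bool) \<Rightarrow> nat" where
  "girth V E = Inf {length xs | xs. is_cycle V E xs}"

definition graph_aut :: "'a set \<Rightarrow> ('a \<Rightarrow> 'a \<Rightarrow> bool) \<Rightarrow> ('a \<Rightarrow> 'a) \<Rightarrow> bool" where
  "graph_aut V E g \<longleftrightarrow> g permutes V \<and> (\<forall>x\<in>V. \<forall>y\<in>V. E x y \<longleftrightarrow> E (g x) (g y))"

definition aut_subgroup :: "'a set \<Rightarrow> ('a \<Rightarrow> 'a \<Rightarrow> bool) \<Rightarrow> ('a \<Rightarrow> 'a) set \<Rightarrow> bool" where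
  "aut_subgroup V E G \<longleftrightarrow> (\<forall>g\<in>G. graph_aut V E g) \<and> id \<in> G
     \<and> (\<forall>g\<in>G. \<forall>h\<in>G. g \<circ> h \<in> G) \<and> (\<forall>g\<in>G. inv g \<in> G)"

definition vertex_transitive :: "'a set \<Rightarrow> ('a \<Rightarrow> 'a) set \<Rightarrow> bool" where
  "vertex_transitive V G \<longleftrightarrow> (\<forall>u\<in>V. \<forall>v\<in>V. \<exists>g\<in>G. g u = v)"

definition stab_transitive_on :: "('a \<Rightarrow> 'a) set \<Rightarrow> 'a \<Rightarrow> 'a set \<Rightarrow> bool" where
  "stab_transitive_on G u S \<longleftrightarrow> (\<forall>v\<in>S. \<forall>w\<in>S. \<exists>g\<in>G. g u = u \<and> g v = w)"

definition two_distance_transitive ::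
  "'a set \<Rightarrow> ('a \<Rightarrow> 'a \<Rightarrow> bool) \<Rightarrow> ('a \<Rightarrow> 'a) set \<Rightarrow> bool" where
  "two_distance_transitive V E G \<longleftrightarrow> diameter V E \<ge> 2 \<and> vertex_transitive V G \<and>
     (\<forall>u\<in>V. stab_transitive_on G u (sphere V E 1 u) \<and> stab_transitive_on G u (sphere V E 2 u))"

definition two_arc :: "('a \<Rightarrow> 'a \<Rightarrow> bool) \<Rightarrow> 'a \<times> 'a \<times> 'a \<Rightarrow> bool" where
  "two_arc E t \<longleftrightarrow> (case t of (u0, u1, u2) \<Rightarrow> E u0 u1 \<and> E u1 u2 \<and> u0 \<noteq> u2)"

definition two_arc_transitive ::
  "'a set \<Rightarrow> ('a \<Rightarrow> 'a \<Rightarrow> bool) \<Rightarrow> ('a \<Rightarrow> 'a) set \<Rightarrow> bool" where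
  "two_arc_transitive V E G \<longleftrightarrow> vertex_transitive V G \<and>
     (\<forall>u0 u1 u2 v0 v1 v2. two_arc E (u0, u1, u2) \<longrightarrow> two_arc E (v0, v1, v2) \<longrightarrow>
        (\<exists>g\<in>G. g u0 = v0 \<and> g u1 = v1 \<and> g u2 = v2))"

end

theory Submission
  imports Defs
begin

lemma double_count:
  fixes P :: "('a \<times> 'b) set"
  assumes "finite A" "finite B" "P \<subseteq> A \<times> B"
    and "\<forall>a\<in>A. card {b. (a,b) \<in> P} = m"
    and "\<forall>b\<in>B. card {a. (a,b) \<in> P} = n"
  shows "card A * m = card B * n"
proof -
  have fA: "\<And>a. finite {b. (a,b) \<in> P}"
    using assms(2,3) by (auto intro: finite_subset[of _ B])
  have fB: "\<And>b. finite {a. (a,b) \<in> P}"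
    using assms(1,3) by (auto intro: finite_subset[of _ A])
  have "P = Sigma A (\<lambda>a. {b. (a,b) \<in> P})" using assms(3) by auto
  hence "card P = (\<Sum>a\<in>A. card {b. (a,b) \<in> P})"
    using card_SigmaI[OF assms(1)] fA by metis
  also have "\<dots> = card A * m" using assms(4) by simp
  finally have 1: "card P = card A * m" .
  have "prod.swap ` P = Sigma B (\<lambda>b. {a. (a,b) \<in> P})" using assms(3) by force
  hence "card (prod.swap ` P) = (\<Sum>b\<in>B. card {a. (a,b) \<in> P})"
    using card_SigmaI[OF assms(2)] fB by metis
  also have "\<dots> = card B * n" using assms(5) by simp
  finally have 2: "card (prod.swap ` P) = card B * n" .
  have "card (prod.swap ` P) = card P" by (simp add: card_image)
  with 1 2 show ?thesis by simp
qed

locale tg =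
  fixes V :: "'a set" and E :: "'a \<Rightarrow> 'a \<Rightarrow> bool" and G :: "('a \<Rightarrow> 'a) set"
    and k c2 :: nat
  assumes sg: "simple_graph V E"
    and ag: "aut_subgroup V E G"
    and dt: "two_distance_transitive V E G"
    and reg: "regular V E k" and k2: "k \<ge> 2"
    and c2: "\<forall>u\<in>V. \<forall>v\<in>V. gdist E u v = 2 \<longrightarrow> card (nbrs E u \<inter> nbrs E v) = c2"
    and cop: "gcd c2 (k - 1) = 1"
    and notri: "\<forall>a b c. E a b \<longrightarrow> E b c \<longrightarrow> \<not> E c a"
begin

lemma finV: "finite V" using sg by (simp add: simple_graph_def)
lemma EV: "E x y \<Longrightarrow> x \<in> V \<and> y \<in> V" using sg by (simp add: simple_graph_def)
lemma Esym: "E x y \<Longrightarrow> E y x" using sg by (simp add: simple_graph_def)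
lemma Eirr: "\<not> E x x" using sg by (simp add: simple_graph_def)
lemma nbrsV: "nbrs E w \<subseteq> V" using EV by (auto simp: nbrs_def)
lemma fin_nbrs: "finite (nbrs E w)" using nbrsV finV finite_subset by blast
lemma card_nbrs: "w \<in> V \<Longrightarrow> card (nbrs E w) = k" using reg by (simp add: regular_def)

lemma gdist_self: "gdist E u u = 0"
  unfolding gdist_def by (rule Least_equality) auto

lemma gdist1: "E u v \<Longrightarrow> gdist E u v = 1"
  unfolding gdist_def
proof (rule Least_equality)
  assume "E u v" thus "(E ^^ 1) u v" by (auto simp: relcompp_apply)
next
  fix n assume "E u v" "(E ^^ n) u v"
  thus "1 \<le> n" using Eirr by (cases n) auto
qed

lemma gdist2: assumes "u \<noteq> v" "\<not> E u v" "E u w" "E w v" shows "gdist E u v = 2"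
  unfolding gdist_def
proof (rule Least_equality)
  show "(E ^^ 2) u v" using assms by (auto simp: numeral_2_eq_2 relcompp_apply)
next
  fix n assume h: "(E ^^ n) u v"
  show "2 \<le> n"
  proof (rule ccontr)
    assume "\<not> 2 \<le> n"
    hence "n = 0 \<or> n = 1" by auto
    thus False
    proof
      assume "n = 0" thus False using h assms(1) by simp
    next
      assume "n = 1" hence "E u v" using h by (simp add: relcompp_apply)
      thus False using assms(2) by simp
    qed
  qed
qed

lemma Gaut: "g \<in> G \<Longrightarrow> graph_aut V E g" using ag by (simp add: aut_subgroup_def)
lemma Gperm: assumes "g \<in> G" shows "g permutes V"
  using Gaut[OF assms] unfolding graph_aut_def by blast
lemma Gpres: assumes "g \<in> G" shows "\<forall>x\<in>V. \<forall>y\<in>V. E x y \<longleftrightarrow> E (g x) (g y)"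
  using Gaut[OF assms] unfolding graph_aut_def by blast
lemma Gcomp: "g \<in> G \<Longrightarrow> h \<in> G \<Longrightarrow> g \<circ> h \<in> G" using ag by (simp add: aut_subgroup_def)
lemma Ginv: "g \<in> G \<Longrightarrow> inv g \<in> G" using ag by (simp add: aut_subgroup_def)
lemma Gid: "id \<in> G" using ag by (simp add: aut_subgroup_def)
lemma GE: assumes "g \<in> G" "E x y" shows "E (g x) (g y)"
proof -
  have "x \<in> V" "y \<in> V" using EV[OF assms(2)] by auto
  thus ?thesis using Gpres[OF assms(1)] assms(2) by auto
qed
lemma GnE: assumes "g \<in> G" "x \<in> V" "y \<in> V" "\<not> E x y" shows "\<not> E (g x) (g y)"
  using Gpres[OF assms(1)] assms(2-4) by auto
lemma Ginj: assumes "g \<in> G" "g x = g y" shows "x = y"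
  using injD[OF permutes_inj[OF Gperm[OF assms(1)]] assms(2)] .
lemma GV: assumes "g \<in> G" "x \<in> V" shows "g x \<in> V"
  using permutes_in_image[OF Gperm[OF assms(1)]] assms(2) by simp
lemma Ginv1: assumes "g \<in> G" shows "inv g (g x) = x"
  by (rule permutes_inverses(2)[OF Gperm[OF assms]])
lemma Ginv2: assumes "g \<in> G" shows "g (inv g x) = x"
  by (rule permutes_inverses(1)[OF Gperm[OF assms]])

lemma sph1: assumes "E u v" shows "v \<in> sphere V E 1 u"
proof -
  have "v \<in> V" using EV[OF assms] by blast
  moreover have "gdist E u v = 1" using gdist1[OF assms] .
  ultimately show ?thesis unfolding sphere_def by blast
qed

lemma stab1: assumes "u \<in> V" "E u v" "E u w" shows "\<exists>g\<in>G. g u = u \<and> g v = w"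
proof -
  have "stab_transitive_on G u (sphere V E 1 u)"
    using dt assms(1) unfolding two_distance_transitive_def by blast
  thus ?thesis using sph1[OF assms(2)] sph1[OF assms(3)] unfolding stab_transitive_on_def by blast
qed

lemma stab2: assumes "u \<in> V" "v \<in> sphere V E 2 u" "w \<in> sphere V E 2 u" shows "\<exists>g\<in>G. g u = u \<and> g v = w"
proof -
  have "stab_transitive_on G u (sphere V E 2 u)"
    using dt assms(1) unfolding two_distance_transitive_def by blast
  thus ?thesis using assms(2,3) unfolding stab_transitive_on_def by blast
qed

lemma key:
  assumes e: "E v0 v1" and x: "x \<in> nbrs E v1 - {v0}" and x': "x' \<in> nbrs E v1 - {v0}"
  shows "\<exists>g\<in>G. g v0 = v0 \<and> g v1 = v1 \<and> g x = x'"
proof -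
  have v0V: "v0 \<in> V" and v1V: "v1 \<in> V" using EV e by auto
  define S where "S = {g\<in>G. g v0 = v0}"
  define N where "N = nbrs E v0"
  define T where "T = sphere V E 2 v0"
  define P where "P = {(g v1, g x) | g. g \<in> S}"
  define Orb where "Orb = {y. (v1,y) \<in> P}"
  have NV: "N \<subseteq> V" using nbrsV N_def by simp
  have TV: "T \<subseteq> V" by (auto simp: T_def sphere_def)
  have finN: "finite N" using NV finV finite_subset by blast
  have finT: "finite T" using TV finV finite_subset by blast
  have cardN: "card N = k" using card_nbrs v0V N_def by simp
  have inT: "y \<in> T" if "E v0 w" "E w y" "y \<noteq> v0" for w y
  proof -
    have "\<not> E v0 y" using notri that Esym by blast
    hence "gdist E v0 y = 2" using gdist2[of v0 y w] that by simp
    thus ?thesis using EV that by (auto simp: T_def sphere_def)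
  qed
  have v0T: "v0 \<notin> T" by (simp add: T_def sphere_def gdist_self)
  have card1: "card (nbrs E w - {v0}) = k - 1" if "w \<in> N" for w
  proof -
    have "v0 \<in> nbrs E w" using that Esym by (simp add: N_def nbrs_def)
    moreover have "w \<in> V" using that NV by auto
    ultimately show ?thesis using card_nbrs fin_nbrs by simp
  qed
  have cT: "card (N \<inter> nbrs E y) = c2" if "y \<in> T" for y
    using c2 v0V that TV by (auto simp: N_def T_def sphere_def)
  define Q where "Q = {(w,y). w \<in> N \<and> y \<in> T \<and> E w y}"
  have Tcount: "k * (k - 1) = card T * c2"
  proof -
    have "card N * (k - 1) = card T * c2"
    proof (rule double_count[OF finN finT, of Q])
      show "Q \<subseteq> N \<times> T" by (auto simp: Q_def)
      show "\<forall>a\<in>N. card {b. (a, b) \<in> Q} = k - 1"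
      proof
        fix w assume w: "w \<in> N"
        have "{b. (w, b) \<in> Q} = nbrs E w - {v0}"
          using w inT v0T by (auto simp: Q_def nbrs_def N_def)
        thus "card {b. (w, b) \<in> Q} = k - 1" using card1 w by simp
      qed
      show "\<forall>b\<in>T. card {a. (a, b) \<in> Q} = c2"
      proof
        fix y assume y: "y \<in> T"
        have "{a. (a, y) \<in> Q} = N \<inter> nbrs E y"
          using y Esym by (auto simp: Q_def nbrs_def)
        thus "card {a. (a, y) \<in> Q} = c2" using cT y by simp
      qed
    qed
    thus ?thesis using cardN by simp
  qed
  have xT: "x \<in> T" using x e inT by (auto simp: nbrs_def)
  have xV: "x \<in> V" using xT TV by auto
  have Pfact: "w \<in> N \<and> y \<in> T \<and> E w y" if wy: "(w,y) \<in> P" for w y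
  proof -
    obtain g where "g \<in> S" "(w, y) = (g v1, g x)"
      using wy unfolding P_def by blast
    hence g: "g \<in> G" "g v0 = v0" "w = g v1" "y = g x" by (auto simp: S_def)
    have "E v0 w" using GE[OF g(1) e] g by simp
    moreover have "E w y" using GE[OF g(1), of v1 x] x g by (simp add: nbrs_def)
    moreover have "y \<noteq> v0" using Ginj[OF g(1), of x v0] g x by auto
    ultimately show ?thesis using inT by (auto simp: N_def nbrs_def)
  qed
  have PNT: "P \<subseteq> N \<times> T" using Pfact by auto
  define j where "j = card {w. (w,x) \<in> P}"
  have count: "card N * card Orb = card T * j"
  proof (rule double_count[OF finN finT PNT])
    show "\<forall>a\<in>N. card {b. (a, b) \<in> P} = card Orb"
    proof
      fix w assume w: "w \<in> N"
      obtain h where h: "h \<in> G" "h v0 = v0" "h v1 = w"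
        using stab1[OF v0V e, of w] w by (auto simp: N_def nbrs_def)
      have "{b. (w, b) \<in> P} = h ` Orb"
      proof
        show "h ` Orb \<subseteq> {b. (w, b) \<in> P}"
        proof
          fix z assume "z \<in> h ` Orb"
          then obtain g where g: "g \<in> G" "g v0 = v0" "g v1 = v1" "z = h (g x)"
            by (auto simp: Orb_def P_def S_def)
          have "h \<circ> g \<in> S" using Gcomp[OF h(1) g(1)] g h by (simp add: S_def)
          moreover have "(w, z) = ((h \<circ> g) v1, (h \<circ> g) x)" using g h by simp
          ultimately show "z \<in> {b. (w, b) \<in> P}" unfolding P_def by blast
        qed
      next
        show "{b. (w, b) \<in> P} \<subseteq> h ` Orb"
        proof
          fix z assume "z \<in> {b. (w, b) \<in> P}"
          then obtain g where g: "g \<in> G" "g v0 = v0" "w = g v1" "z = g x"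
            by (auto simp: P_def S_def)
          define g' where "g' = inv h \<circ> g"
          have "g' \<in> G" using Gcomp[OF Ginv[OF h(1)] g(1)] g'_def by simp
          moreover have "g' v0 = v0" using g h Ginv1[OF h(1), of v0] by (simp add: g'_def)
          ultimately have "g' \<in> S" by (simp add: S_def)
          moreover have "g' v1 = v1" using g h Ginv1[OF h(1), of v1] by (simp add: g'_def)
          ultimately have "(g' v1, g' x) \<in> P" unfolding P_def by blast
          hence "g' x \<in> Orb" using \<open>g' v1 = v1\<close> unfolding Orb_def by simp
          moreover have "z = h (g' x)" using g Ginv2[OF h(1)] by (simp add: g'_def)
          ultimately show "z \<in> h ` Orb" by blast
        qed
      qed
      moreover have "inj_on h Orb" using Ginj[OF h(1)] by (meson inj_onI)
      ultimately show "card {b. (w, b) \<in> P} = card Orb" by (simp add: card_image)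
    qed
    show "\<forall>b\<in>T. card {a. (a, b) \<in> P} = j"
    proof
      fix y assume y: "y \<in> T"
      obtain h where h: "h \<in> G" "h v0 = v0" "h x = y"
        using stab2[OF v0V, of x y] y xT by (auto simp: T_def)
      have "{a. (a, y) \<in> P} = h ` {w. (w,x) \<in> P}"
      proof
        show "h ` {w. (w,x) \<in> P} \<subseteq> {a. (a, y) \<in> P}"
        proof
          fix z assume "z \<in> h ` {w. (w,x) \<in> P}"
          then obtain g where g: "g \<in> G" "g v0 = v0" "g x = x" "z = h (g v1)"
            by (auto simp: P_def S_def)
          have "h \<circ> g \<in> S" using Gcomp[OF h(1) g(1)] g h by (simp add: S_def)
          moreover have "(z, y) = ((h \<circ> g) v1, (h \<circ> g) x)" using g h by simp
          ultimately show "z \<in> {a. (a, y) \<in> P}" unfolding P_def by blast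
        qed
      next
        show "{a. (a, y) \<in> P} \<subseteq> h ` {w. (w,x) \<in> P}"
        proof
          fix z assume "z \<in> {a. (a, y) \<in> P}"
          then obtain g where g: "g \<in> G" "g v0 = v0" "z = g v1" "y = g x"
            by (auto simp: P_def S_def)
          define g' where "g' = inv h \<circ> g"
          have "g' \<in> G" using Gcomp[OF Ginv[OF h(1)] g(1)] g'_def by simp
          moreover have "g' v0 = v0" using g h Ginv1[OF h(1), of v0] by (simp add: g'_def)
          ultimately have "g' \<in> S" by (simp add: S_def)
          moreover have "g' x = x" using g h Ginv1[OF h(1), of x] by (simp add: g'_def)
          ultimately have "(g' v1, g' x) \<in> P" unfolding P_def by blast
          hence "g' v1 \<in> {w. (w,x) \<in> P}" using \<open>g' x = x\<close> by simp
          moreover have "z = h (g' v1)" using g Ginv2[OF h(1)] by (simp add: g'_def)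
          ultimately show "z \<in> h ` {w. (w,x) \<in> P}" by blast
        qed
      qed
      moreover have "inj_on h {w. (w,x) \<in> P}" using Ginj[OF h(1)] by (meson inj_onI)
      ultimately show "card {a. (a, y) \<in> P} = j" by (simp add: card_image j_def)
    qed
  qed
  have jle: "j \<le> c2"
  proof -
    have "{w. (w,x) \<in> P} \<subseteq> N \<inter> nbrs E x" using Pfact Esym by (auto simp: nbrs_def)
    hence "j \<le> card (N \<inter> nbrs E x)" unfolding j_def
      using finN by (meson card_mono finite_Int)
    thus ?thesis using cT xT by simp
  qed
  define m where "m = card Orb"
  have "k * (m * c2) = k * ((k - 1) * j)"
    using count Tcount cardN unfolding m_def by (metis mult.assoc mult.commute)
  hence eq: "m * c2 = (k - 1) * j" using k2 by simp
  have "coprime (k - 1) c2" using cop by (simp add: coprime_iff_gcd_eq_1 gcd.commute)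
  hence dvd: "(k - 1) dvd m" using eq
    by (metis coprime_dvd_mult_left_iff dvd_triv_left)
  have Osub: "Orb \<subseteq> nbrs E v1 - {v0}" using Pfact v0T by (auto simp: Orb_def nbrs_def)
  have finO: "finite (nbrs E v1 - {v0})" using fin_nbrs by simp
  have xO: "x \<in> Orb"
  proof -
    have "id \<in> S" using Gid by (simp add: S_def)
    hence "(id v1, id x) \<in> P" unfolding P_def by blast
    thus ?thesis unfolding Orb_def by simp
  qed
  have "m > 0" unfolding m_def using xO finO Osub
    by (metis card_gt_0_iff empty_iff finite_subset)
  hence "k - 1 \<le> m" using dvd by (simp add: dvd_imp_le)
  moreover have cv1: "card (nbrs E v1 - {v0}) = k - 1"
    using card1[of v1] e by (simp add: N_def nbrs_def)
  ultimately have "card (nbrs E v1 - {v0}) \<le> card Orb" by (simp add: m_def)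
  hence "Orb = nbrs E v1 - {v0}" using card_seteq[OF finO Osub] by simp
  hence "x' \<in> Orb" using x' by simp
  then obtain g where "g \<in> S" "v1 = g v1" "x' = g x" by (auto simp: Orb_def P_def)
  thus ?thesis by (auto simp: S_def)
qed

lemma arc_trans: "two_arc_transitive V E G"
  unfolding two_arc_transitive_def
proof (intro conjI allI impI)
  show "vertex_transitive V G" using dt by (simp add: two_distance_transitive_def)
next
  fix u0 u1 u2 v0 v1 v2
  assume a: "two_arc E (u0, u1, u2)" and b: "two_arc E (v0, v1, v2)"
  have ua: "E u0 u1" "E u1 u2" "u0 \<noteq> u2" using a by (auto simp: two_arc_def)
  have va: "E v0 v1" "E v1 v2" "v0 \<noteq> v2" using b by (auto simp: two_arc_def)
  obtain g1 where g1: "g1 \<in> G" "g1 u0 = v0"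
    using dt EV[OF ua(1)] EV[OF va(1)] unfolding two_distance_transitive_def vertex_transitive_def by blast
  have "E v0 (g1 u1)" using GE[OF g1(1) ua(1)] g1 by simp
  then obtain g2 where g2: "g2 \<in> G" "g2 v0 = v0" "g2 (g1 u1) = v1"
    using stab1[of v0 "g1 u1" v1] va EV by blast
  define h where "h = g2 \<circ> g1"
  have hG: "h \<in> G" using Gcomp g1 g2 h_def by simp
  have h0: "h u0 = v0" "h u1 = v1" using g1 g2 h_def by auto
  have "E v1 (h u2)" using GE[OF hG ua(2)] h0 by simp
  moreover have "h u2 \<noteq> v0" using Ginj[OF hG, of u2 u0] h0 ua by auto
  ultimately have "h u2 \<in> nbrs E v1 - {v0}" by (simp add: nbrs_def)
  moreover have "v2 \<in> nbrs E v1 - {v0}" using va by (simp add: nbrs_def)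
  ultimately obtain g3 where g3: "g3 \<in> G" "g3 v0 = v0" "g3 v1 = v1" "g3 (h u2) = v2"
    using key[OF va(1)] by blast
  have "g3 \<circ> h \<in> G" using Gcomp g3 hG by simp
  thus "\<exists>g\<in>G. g u0 = v0 \<and> g u1 = v1 \<and> g u2 = v2"
    using g3 h0 by (intro bexI[of _ "g3 \<circ> h"]) auto
qed

end

theorem lemma5p7:
  fixes V :: "'a set" and E :: "'a \<Rightarrow> 'a \<Rightarrow> bool" and G :: "('a \<Rightarrow> 'a) set"
    and k c2 :: nat
  assumes "simple_graph V E" and "connected_graph V E"
    and "aut_subgroup V E G"
    and "two_distance_transitive V E G"
    and "regular V E k" and "k \<ge> 2"
    and "\<forall>u\<in>V. \<forall>v\<in>V. gdist E u v = 2 \<longrightarrow> card (nbrs E u \<inter> nbrs E v) = c2"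
    and "gcd c2 (k - 1) = 1"
  shows "girth V E = 3 \<or> two_arc_transitive V E G"
proof (cases "\<exists>a b c. E a b \<and> E b c \<and> E c a")
  case True
  then obtain a b c where t: "E a b" "E b c" "E c a" by blast
  have irr: "\<And>x. \<not> E x x" and EV: "\<And>x y. E x y \<Longrightarrow> x \<in> V \<and> y \<in> V"
    using assms(1) by (auto simp: simple_graph_def)
  have "is_cycle V E [a, b, c]"
    unfolding is_cycle_def
  proof (intro conjI allI impI)
      have "a \<noteq> b" using t(1) irr by metis
    moreover have "b \<noteq> c" using t(2) irr by metis
    moreover have "a \<noteq> c" using t(3) irr by metis
    ultimately show "distinct [a, b, c]" by simp
    show "set [a, b, c] \<subseteq> V" using t EV by auto
  next
    fix i assume "i < length [a, b, c]"
    hence "i = 0 \<or> i = 1 \<or> i = 2" by auto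
    thus "E ([a, b, c] ! i) ([a, b, c] ! ((i + 1) mod length [a, b, c]))"
    proof (elim disjE)
      assume "i = 0" thus ?thesis using t(1) by simp
    next
      assume "i = 1" thus ?thesis using t(2) by simp
    next
      assume "i = 2" thus ?thesis using t(3) by simp
    qed
  qed simp
  hence "\<exists>xs. 3 = length xs \<and> is_cycle V E xs" by (intro exI[of _ "[a, b, c]"]) simp
  hence mem: "3 \<in> {length xs | xs. is_cycle V E xs}" by blast
  have "girth V E = 3" unfolding girth_def
    by (rule cInf_eq_minimum[OF mem]) (auto simp: is_cycle_def)
  thus ?thesis by simp
next
  case False
  have nt: "\<forall>a b c. E a b \<longrightarrow> E b c \<longrightarrow> \<not> E c a" using False by blast
  interpret tg V E G k c2
    by (rule tg.intro[OF assms(1) assms(3) assms(4) assms(5) assms(6) assms(7) assms(8) nt])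
  show ?thesis using arc_trans by simp
qed

end
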